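(* For every Baire metric space $X$, $dis(X)\geq\Delta(X)$.
   Context: $dis(X)$ denotes the least cardinal $\tau$ such that $X$ is the union of $\tau$ discrete subspaces. $\Delta(X)$ is the least cardinality of a non-empty open subset of $X$. *)

theory Defs
  imports "HOL-Analysis.Analysis"
begin

definition Baire_space :: "'a topology \<Rightarrow> bool" where
  "Baire_space X \<longleftrightarrow>
     (\<forall>\<G>. countable \<G> \<and> (\<forall>T\<in>\<G>. openin X T \<and> X closure_of T = topspace X)
          \<longrightarrow> X closure_of \<Inter>\<G> = topspace X)"

definition discrete_subspace :: "'a topology \<Rightarrow> 'a set \<Rightarrow> bool" where
  "discrete_subspace X D \<longleftrightarrow> D \<subseteq> topspace X \<and> subtopology X D = discrete_topology D"

end

theory Submission
  imports Defs
begin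

unbundle cardinal_syntax

lemma discrete_point:
  assumes "Metric_space M d" "discrete_subspace (Metric_space.mtopology M d) D" "x \<in> D"
  shows "\<exists>n::nat. \<forall>y\<in>D. y \<noteq> x \<longrightarrow> 1 / real (Suc n) \<le> d x y"
proof -
  interpret m: Metric_space M d by fact
  have DM: "D \<subseteq> M" and eq: "subtopology m.mtopology D = discrete_topology D"
    using assms(2) unfolding discrete_subspace_def by auto
  have "openin (subtopology m.mtopology D) {x}" using eq assms(3) by simp
  then obtain T where T: "openin m.mtopology T" "{x} = T \<inter> D"
    by (auto simp: openin_subtopology)
  then obtain r where r: "r > 0" "m.mball x r \<subseteq> T"
    using m.openin_mtopology by blast
  obtain n::nat where n: "1 / real (Suc n) < r"
    using r(1) by (metis nat_approx_posE)
  show ?thesis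
  proof (intro exI ballI impI)
    fix y assume y: "y \<in> D" "y \<noteq> x"
    show "1 / real (Suc n) \<le> d x y"
    proof (rule ccontr)
      assume "\<not> ?thesis"
      then have "d x y < r" using n by linarith
      then have "y \<in> m.mball x r" using y DM assms(3) by auto
      then have "y \<in> T \<inter> D" using r y by auto
      then show False using T y by auto
    qed
  qed
qed

theorem mainTheorem3:
  fixes M :: "'a set" and d :: "'a \<Rightarrow> 'a \<Rightarrow> real"
  assumes "Metric_space M d"
    and "M \<noteq> {}"
    and "Baire_space (Metric_space.mtopology M d)"
  shows "\<forall>\<D> :: 'a set set.
           (\<forall>D\<in>\<D>. discrete_subspace (Metric_space.mtopology M d) D) \<and> \<Union>\<D> = M
           \<longrightarrow> (\<exists>U. openin (Metric_space.mtopology M d) U \<and> U \<noteq> {}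
                   \<and> (card_of U, card_of \<D>) \<in> ordLeq)"
proof (intro allI impI)
  fix \<D> :: "'a set set"
  assume H: "(\<forall>D\<in>\<D>. discrete_subspace (Metric_space.mtopology M d) D) \<and> \<Union>\<D> = M"
  interpret m: Metric_space M d by fact
  define Dn where "Dn D n = {x\<in>D. \<forall>y\<in>D. y\<noteq>x \<longrightarrow> 1/real (Suc n) \<le> d x y}" for D n
  define E where "E n = (\<Union>D\<in>\<D>. Dn D n)" for n
  have DM: "\<And>D. D \<in> \<D> \<Longrightarrow> D \<subseteq> M" using H by auto
  have disc: "\<And>D x. D\<in>\<D> \<Longrightarrow> x\<in>D \<Longrightarrow> \<exists>n. x \<in> Dn D n"
    using discrete_point[OF assms(1)] H unfolding Dn_def by blast
  have EM: "E n \<subseteq> M" for n using DM unfolding E_def Dn_def by auto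
  have cover: "M \<subseteq> (\<Union>n. E n)"
  proof
    fix x assume "x \<in> M"
    then obtain D where "D \<in> \<D>" "x \<in> D" using H by auto
    then show "x \<in> (\<Union>n. E n)" using disc unfolding E_def by blast
  qed
  have "\<exists>n. m.mtopology interior_of (m.mtopology closure_of E n) \<noteq> {}"
  proof (rule ccontr)
    assume A: "\<not> ?thesis"
    define \<G> where "\<G> = range (\<lambda>n. M - m.mtopology closure_of E n)"
    have "countable \<G>" unfolding \<G>_def by simp
    moreover have "\<forall>T\<in>\<G>. openin m.mtopology T \<and> m.mtopology closure_of T = topspace m.mtopology"
    proof
      fix T assume "T \<in> \<G>"
      then obtain n where Tn: "T = M - m.mtopology closure_of E n" unfolding \<G>_def by auto
      have "openin m.mtopology T" unfolding Tn
        by (metis closedin_closure_of m.topspace_mtopology openin_diff openin_topspace)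
      moreover have "m.mtopology closure_of T = topspace m.mtopology"
        using A closure_of_complement[of m.mtopology "m.mtopology closure_of E n"] Tn by simp
      ultimately show "openin m.mtopology T \<and> m.mtopology closure_of T = topspace m.mtopology" ..
    qed
    ultimately have "m.mtopology closure_of \<Inter>\<G> = topspace m.mtopology"
      using assms(3) unfolding Baire_space_def by blast
    moreover have "\<Inter>\<G> = {}"
    proof -
      have "E n \<subseteq> m.mtopology closure_of E n" for n
        using closure_of_subset[of "E n" m.mtopology] EM by simp
      then show ?thesis using cover unfolding \<G>_def by blast
    qed
    ultimately show False using assms(2) by simp
  qed
  then obtain n x where x: "x \<in> m.mtopology interior_of (m.mtopology closure_of E n)" by blast
  define V where "V = m.mtopology interior_of (m.mtopology closure_of E n)"
  have "openin m.mtopology V" unfolding V_def by simp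
  then obtain r where r: "r > 0" "m.mball x r \<subseteq> V"
    using x m.openin_mtopology unfolding V_def by blast
  have Vc: "V \<subseteq> m.mtopology closure_of E n" unfolding V_def by (rule interior_of_subset)
  define \<rho> where "\<rho> = min r (1 / (2 * real (Suc n)))"
  have \<rho>: "\<rho> > 0" "\<rho> \<le> r" "2 * \<rho> \<le> 1 / real (Suc n)"
  proof -
    show "\<rho> > 0" "\<rho> \<le> r" unfolding \<rho>_def using r by auto
    have "\<rho> \<le> 1 / (2 * real (Suc n))" unfolding \<rho>_def by linarith
    then show "2 * \<rho> \<le> 1 / real (Suc n)" by (simp add: field_simps)
  qed
  define B where "B = m.mball x \<rho>"
  have xM: "x \<in> M" using x interior_of_subset_topspace by force
  have Bopen: "openin m.mtopology B" unfolding B_def by simp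
  have Bne: "B \<noteq> {}" unfolding B_def using xM \<rho> by auto
  have BV: "B \<subseteq> V" unfolding B_def using r \<rho> m.mball_subset_concentric by blast
  define F where "F = B \<inter> E n"
  have key: "a = b" if "D \<in> \<D>" "a \<in> Dn D n" "b \<in> Dn D n" "a \<in> B" "b \<in> B" for a b D
  proof (rule ccontr)
    assume ab: "a \<noteq> b"
    have "d a b \<le> d a x + d x b" using that m.triangle unfolding B_def by auto
    also have "\<dots> < 2 * \<rho>" using that m.commute[of a x] unfolding B_def by auto
    finally have "d a b < 1 / real (Suc n)" using \<rho> by linarith
    moreover have "1 / real (Suc n) \<le> d a b" using that ab unfolding Dn_def by auto
    ultimately show False by linarith
  qed
  have dense: "\<exists>s\<in>F. d y s < e" if y: "y \<in> B" "e > 0" for y e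
  proof -
    have yM: "y \<in> M" using y unfolding B_def by auto
    define e' where "e' = min e (\<rho> - d x y)"
    have "d x y < \<rho>" using y unfolding B_def by auto
    then have e': "e' > 0" unfolding e'_def using y by auto
    have "y \<in> m.mtopology closure_of E n" using y BV Vc by auto
    then obtain s where s: "s \<in> E n" "s \<in> m.mball y e'"
      using e' unfolding m.metric_closure_of by blast
    have "d x s \<le> d x y + d y s" using s yM xM m.triangle by auto
    also have "\<dots> < \<rho>" using s unfolding e'_def by auto
    finally have "s \<in> B" unfolding B_def using s xM by auto
    then show ?thesis using s unfolding F_def e'_def by auto
  qed
  have Bmem: "\<exists>D m. D \<in> \<D> \<and> y \<in> Dn D m" if "y \<in> B" for y
  proof -
    have "y \<in> M" using that unfolding B_def by auto
    then obtain D where "D \<in> \<D>" "y \<in> D" using H by auto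
    then show ?thesis using disc by blast
  qed
  have FD: "|F| \<le>o |\<D>|"
  proof -
    define f where "f y = (SOME D. D \<in> \<D> \<and> y \<in> Dn D n)" for y
    have fy: "f y \<in> \<D> \<and> y \<in> Dn (f y) n" if "y \<in> F" for y
    proof -
      have "\<exists>D. D \<in> \<D> \<and> y \<in> Dn D n" using that unfolding F_def E_def by auto
      then show ?thesis unfolding f_def by (rule someI_ex)
    qed
    have "inj_on f F"
    proof (rule inj_onI)
      fix a b assume "a \<in> F" "b \<in> F" "f a = f b"
      then show "a = b" using fy[of a] fy[of b] key[of "f a" a b] unfolding F_def by auto
    qed
    moreover have "f ` F \<subseteq> \<D>" using fy by auto
    ultimately show ?thesis using card_of_ordLeq by blast
  qed
  have "|B| \<le>o |\<D>|"
  proof (cases "finite \<D>")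
    case True
    then have "finite F" using FD card_of_ordLeq_finite by blast
    then have "closedin m.mtopology F"
      using m.t1_space_mtopology t1_space_closedin_finite unfolding F_def B_def
      by (metis inf.coboundedI1 m.mball_subset_mspace m.topspace_mtopology)
    then have cF: "m.mtopology closure_of F = F" by (rule closure_of_closedin)
    have "B \<subseteq> F"
    proof
      fix y assume y: "y \<in> B"
      have "y \<in> m.mtopology closure_of F"
        unfolding m.metric_closure_of
      proof (intro CollectI conjI allI impI)
        show "y \<in> M" using y unfolding B_def by auto
        fix e :: real assume "e > 0"
        then obtain s where "s \<in> F" "d y s < e" using dense y by blast
        then show "\<exists>s\<in>F. s \<in> m.mball y e" using \<open>y \<in> M\<close> unfolding F_def B_def by auto
      qed
      then show "y \<in> F" using cF by simp
    qed
    then show ?thesis using FD card_of_mono1 ordLeq_transitive by blast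
  next
    case False
    define g where "g y = (SOME t. fst t \<in> \<D> \<and> y \<in> Dn (fst t) (fst (snd t))
        \<and> snd (snd t) \<in> F \<and> d y (snd (snd t)) < 1 / (2 * real (Suc (fst (snd t)))))" for y
    have gy: "fst (g y) \<in> \<D> \<and> y \<in> Dn (fst (g y)) (fst (snd (g y)))
        \<and> snd (snd (g y)) \<in> F \<and> d y (snd (snd (g y))) < 1 / (2 * real (Suc (fst (snd (g y)))))"
      if yB: "y \<in> B" for y
    proof -
      obtain D m where Dm: "D \<in> \<D>" "y \<in> Dn D m" using Bmem yB by blast
      obtain s where s: "s \<in> F" "d y s < 1 / (2 * real (Suc m))"
        using dense[OF yB, of "1 / (2 * real (Suc m))"] by auto
      have "\<exists>t. fst t \<in> \<D> \<and> y \<in> Dn (fst t) (fst (snd t))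
        \<and> snd (snd t) \<in> F \<and> d y (snd (snd t)) < 1 / (2 * real (Suc (fst (snd t))))"
        by (rule exI[of _ "(D, m, s)"]) (use Dm s in auto)
      then show ?thesis unfolding g_def by (rule someI_ex)
    qed
    have "inj_on g B"
    proof (rule inj_onI)
      fix a b assume a: "a \<in> B" and b: "b \<in> B" and gab: "g a = g b"
      obtain D m s where gt: "g a = (D, m, s)" by (metis prod.exhaust)
      have ha: "D \<in> \<D>" "a \<in> Dn D m" "s \<in> F" "d a s < 1 / (2 * real (Suc m))"
        using gy[OF a] gt by auto
      have hb: "b \<in> Dn D m" "d b s < 1 / (2 * real (Suc m))"
        using gy[OF b] gt gab by auto
      show "a = b"
      proof (rule ccontr)
        assume ab: "a \<noteq> b"
        have sM: "s \<in> M" using ha(3) unfolding F_def B_def by auto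
        have aM: "a \<in> M" "b \<in> M" using a b unfolding B_def by auto
        have "d a b \<le> d a s + d s b" using m.triangle sM aM by auto
        also have "\<dots> < 1 / real (Suc m)"
        proof -
          have "1 / (2 * real (Suc m)) + 1 / (2 * real (Suc m)) = 1 / real (Suc m)"
            by (simp add: field_simps)
          moreover obtain q where "q = 1 / (2 * real (Suc m))" by blast
          ultimately show ?thesis using ha(4) hb(2) m.commute[of s b] by (metis add_strict_mono)
        qed
        finally have "d a b < 1 / real (Suc m)" .
        moreover have "1 / real (Suc m) \<le> d a b" using ha(2) hb(1) ab unfolding Dn_def by auto
        ultimately show False by linarith
      qed
    qed
    moreover have "g ` B \<subseteq> \<D> \<times> (UNIV :: nat set) \<times> F"
    proof
      fix t assume "t \<in> g ` B"
      then obtain y where "y \<in> B" "t = g y" by blast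
      then show "t \<in> \<D> \<times> (UNIV :: nat set) \<times> F" using gy[of y] by (auto simp: mem_Times_iff)
    qed
    ultimately have 1: "|B| \<le>o |\<D> \<times> (UNIV :: nat set) \<times> F|"
      using card_of_ordLeq by blast
    have nD: "|UNIV :: nat set| \<le>o |\<D>|" using False infinite_iff_card_of_nat by blast
    have "|(UNIV :: nat set) \<times> F| \<le>o |\<D> \<times> \<D>|"
      using card_of_Times_mono1[OF nD] card_of_Times_mono2[OF FD] ordLeq_transitive by blast
    then have "|\<D> \<times> (UNIV :: nat set) \<times> F| \<le>o |\<D> \<times> (\<D> \<times> \<D>)|"
      by (rule card_of_Times_mono2)
    moreover have "|\<D> \<times> (\<D> \<times> \<D>)| \<le>o |\<D> \<times> \<D>|"
      using card_of_Times_mono2[OF ordIso_iff_ordLeq[THEN iffD1, OF card_of_Times_same_infinite[OF False], THEN conjunct1]] .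
    moreover have "|\<D> \<times> \<D>| \<le>o |\<D>|"
      using card_of_Times_same_infinite[OF False] ordIso_iff_ordLeq by blast
    ultimately show ?thesis using 1 ordLeq_transitive by metis
  qed
  then show "\<exists>U. openin m.mtopology U \<and> U \<noteq> {} \<and> (card_of U, card_of \<D>) \<in> ordLeq"
    using Bopen Bne by blast
qed

end
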